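(* Let $\mathcal{Y}$ be a finite set and let $\mathcal{P}$ be a finitely generated credal set of probability measures on $\mathcal{Y}$ with set of extreme points $\mathrm{ex}\,\mathcal{P}=\{P^{\text{ex}}_s\}_{s=1}^S$. Let $\Delta^{S-1}=\{\beta=(\beta_1,\ldots,\beta_S)^\top:\beta_s\ge0\ \forall s,\ \sum_s\beta_s=1\}$, $\underline{H}(P^{\text{ex}})=\min_{P^{\text{ex}}\in\mathrm{ex}\,\mathcal{P}}H(P^{\text{ex}})$, $\overline{H}(P^{\text{ex}})=\max_{P^{\text{ex}}\in\mathrm{ex}\,\mathcal{P}}H(P^{\text{ex}})$, and $$l[\mathrm{TU}(\mathcal{P})]=\max\Big\{\sup_{\beta\in\Delta^{S-1}}\sum_{s=1}^S\beta_sH(P^{\text{ex}}_s),\ \overline{H}(P^{\text{ex}})\Big\}.$$ Let $\mathrm{TU}(\mathcal{P})=\sup_{P\in\mathcal{P}}H(P)$, $\mathrm{AU}(\mathcal{P})=\inf_{P\in\mathcal{P}}H(P)$ and $\mathrm{EU}(\mathcal{P})=\mathrm{TU}(\mathcal{P})-\mathrm{AU}(\mathcal{P})$. Then $$\mathrm{TU}(\mathcal{P})\in\Big[l[\mathrm{TU}(\mathcal{P})],\ \sup_{\beta\in\Delta^{S-1}}\sum_{s=1}^S\beta_sH(P^{\text{ex}}_s)+\log_2(S)\Big],\qquad \mathrm{AU}(\mathcal{P})=\underline{H}(P^{\text{ex}}),$$ $$\mathrm{EU}(\mathcal{P})\in\Big[\max\{0,\ l[\mathrm{TU}(\mathcal{P})]-\underline{H}(P^{\text{ex}})\},\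 \sup_{\beta\in\Delta^{S-1}}\sum_{s=1}^S\beta_sH(P^{\text{ex}}_s)+\log_2(S)-\underline{H}(P^{\text{ex}})\Big].$$
   Context: A credal set is a closed convex set of probability measures; it is finitely generated if it has finitely many extreme points (elements not expressible as convex combinations of the others). For a probability measure $P$ on finite $\mathcal{Y}$, $H(P)=-\sum_{y\in\mathcal{Y}}P(\{y\})\log_2P(\{y\})$ is the Shannon entropy. *)

theory Defs
  imports "HOL-Analysis.Analysis"
begin

text \<open>A probability measure on the finite set 'y is represented by its probability
  mass vector p :: real^'y (p$y = P({y})).\<close>

definition prob_vec :: "real^'y::finite \<Rightarrow> bool" where
  "prob_vec p \<longleftrightarrow> (\<forall>y. p $ y \<ge> 0) \<and> (\<Sum>y\<in>UNIV. p $ y) = 1"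

text \<open>Shannon entropy in bits (0 log 0 = 0; note log 2 0 = 0 in Isabelle).\<close>
definition entropy :: "real^'y::finite \<Rightarrow> real" where
  "entropy p = - (\<Sum>y\<in>UNIV. p $ y * log 2 (p $ y))"

definition credal_set :: "(real^'y::finite) set \<Rightarrow> bool" where
  "credal_set P \<longleftrightarrow> P \<noteq> {} \<and> closed P \<and> convex P \<and> (\<forall>p\<in>P. prob_vec p)"

definition finitely_generated :: "(real^'y::finite) set \<Rightarrow> bool" where
  "finitely_generated P \<longleftrightarrow> finite {x. x extreme_point_of P}"

definition prob_simplex :: "nat \<Rightarrow> (nat \<Rightarrow> real) set" where
  "prob_simplex S = {\<beta>. (\<forall>s\<in>{1..S}. \<beta> s \<ge> 0) \<and> (\<Sum>s=1..S. \<beta> s) = 1}"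

end

theory Submission imports Defs begin

lemma aux_ln: fixes a b :: real assumes "a > 0" "b > 0"
  shows "a - b \<le> a * (ln a - ln b)"
proof -
  have "ln (b/a) \<le> b/a - 1" using assms by (intro ln_le_minus_one) simp
  hence "ln b - ln a \<le> b/a - 1" using assms by (simp add: ln_div)
  hence "a * (ln b - ln a) \<le> a * (b/a - 1)" using assms by (intro mult_left_mono) auto
  thus ?thesis using assms by (simp add: algebra_simps)
qed

lemma mix_lower:
  fixes \<beta> x :: "nat \<Rightarrow> real" and I :: "nat set"
  assumes "finite I" "\<forall>i\<in>I. \<beta> i \<ge> 0" "\<forall>i\<in>I. x i \<ge> 0" "sum \<beta> I = 1"
  shows "(\<Sum>i\<in>I. \<beta> i * (- (x i * log 2 (x i)))) \<le> - ((\<Sum>i\<in>I. \<beta> i * x i) * log 2 (\<Sum>i\<in>I. \<beta> i * x i))"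
proof -
  define m where "m = (\<Sum>i\<in>I. \<beta> i * x i)"
  have tm: "\<beta> i * (x i - m) \<le> \<beta> i * (x i * (ln (x i) - ln m))" if i: "i \<in> I" for i
  proof (cases "\<beta> i = 0 \<or> x i = 0")
    case True
    have "m \<ge> 0" unfolding m_def using assms by (intro sum_nonneg) auto
    then show ?thesis using True assms i by auto
  next
    case False
    hence pos: "\<beta> i > 0" "x i > 0" using assms i by auto
    have "\<beta> i * x i \<le> m" unfolding m_def using assms i
      by (intro member_le_sum) auto
    hence "m > 0" using pos by (smt (verit) mult_pos_pos)
    then show ?thesis using aux_ln[OF pos(2) \<open>m>0\<close>] pos(1) by (intro mult_left_mono) auto
  qed
  have "0 = (\<Sum>i\<in>I. \<beta> i * (x i - m))"
    by (simp add: right_diff_distrib sum_subtractf m_def flip: sum_distrib_right assms(4))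
  also have "\<dots> \<le> (\<Sum>i\<in>I. \<beta> i * (x i * (ln (x i) - ln m)))" using tm by (intro sum_mono) auto
  also have "\<dots> = (\<Sum>i\<in>I. \<beta> i * x i * ln (x i)) - m * ln m"
    by (simp add: algebra_simps sum_subtractf m_def sum_distrib_right)
  finally have "m * ln m \<le> (\<Sum>i\<in>I. \<beta> i * x i * ln (x i))" by simp
  hence "m * ln m / ln 2 \<le> (\<Sum>i\<in>I. \<beta> i * x i * ln (x i)) / ln 2" by (simp add: divide_right_mono)
  thus ?thesis unfolding m_def[symmetric]
    by (simp add: log_def sum_divide_distrib sum_negf algebra_simps)
qed

lemma mix_upper:
  fixes \<beta> x :: "nat \<Rightarrow> real" and I :: "nat set"
  assumes "finite I" "\<forall>i\<in>I. \<beta> i \<ge> 0" "\<forall>i\<in>I. x i \<ge> 0"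
  shows "- ((\<Sum>i\<in>I. \<beta> i * x i) * log 2 (\<Sum>i\<in>I. \<beta> i * x i))
     \<le> (\<Sum>i\<in>I. \<beta> i * (- (x i * log 2 (x i))) + \<beta> i * x i * (- log 2 (\<beta> i)))"
proof -
  define m where "m = (\<Sum>i\<in>I. \<beta> i * x i)"
  have tm: "\<beta> i * x i * (- log 2 m) \<le> \<beta> i * (- (x i * log 2 (x i))) + \<beta> i * x i * (- log 2 (\<beta> i))"
    if i: "i \<in> I" for i
  proof (cases "\<beta> i = 0 \<or> x i = 0")
    case True
    then show ?thesis by auto
  next
    case False
    hence pos: "\<beta> i > 0" "x i > 0" using assms i by auto
    have "\<beta> i * x i \<le> m" unfolding m_def using assms i
      by (intro member_le_sum) auto
    hence "log 2 (\<beta> i * x i) \<le> log 2 m" using pos by (subst log_le_cancel_iff) (auto intro: less_le_trans[OF mult_pos_pos])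
    hence "log 2 (\<beta> i) + log 2 (x i) \<le> log 2 m" using pos by (simp add: log_mult)
    hence "\<beta> i * x i * (- log 2 m) \<le> \<beta> i * x i * (- log 2 (\<beta> i) - log 2 (x i))"
      using pos by (intro mult_left_mono) auto
    then show ?thesis by (simp add: algebra_simps)
  qed
  have "- (m * log 2 m) = (\<Sum>i\<in>I. \<beta> i * x i * (- log 2 m))"
    by (simp add: m_def sum_distrib_right sum_negf)
  also have "\<dots> \<le> (\<Sum>i\<in>I. \<beta> i * (- (x i * log 2 (x i))) + \<beta> i * x i * (- log 2 (\<beta> i)))" using tm by (intro sum_mono) auto
  finally show ?thesis unfolding m_def .
qed

lemma weight_entropy:
  fixes \<beta> :: "nat \<Rightarrow> real" and I :: "nat set"
  assumes "finite I" "\<forall>i\<in>I. \<beta> i \<ge> 0" "sum \<beta> I = 1"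
  shows "(\<Sum>i\<in>I. \<beta> i * (- log 2 (\<beta> i))) \<le> log 2 (real (card I))"
proof -
  have cI: "card I > 0" using assms by (metis card_gt_0_iff sum.empty sum.infinite zero_neq_one)
  have Ine: "I \<noteq> {}" using cI by auto
  define c where "c = real (card I)"
  have cpos: "c > 0" using cI c_def by simp
  have tm: "\<beta> i * (- ln (\<beta> i)) - \<beta> i * ln c \<le> 1 / c - \<beta> i" if i: "i \<in> I" for i
  proof (cases "\<beta> i = 0")
    case True then show ?thesis using cpos by simp
  next
    case False
    hence pos: "\<beta> i > 0" using assms i by force
    have "ln (1 / (c * \<beta> i)) \<le> 1 / (c * \<beta> i) - 1" using pos cpos by (intro ln_le_minus_one) simp
    hence "- ln c - ln (\<beta> i) \<le> 1 / (c * \<beta> i) - 1" using pos cpos by (simp add: ln_div ln_mult)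
    hence "\<beta> i * (- ln c - ln (\<beta> i)) \<le> \<beta> i * (1 / (c * \<beta> i) - 1)" using pos by (intro mult_left_mono) auto
    then show ?thesis using pos cpos by (simp add: algebra_simps)
  qed
  have "(\<Sum>i\<in>I. \<beta> i * (- ln (\<beta> i) ) - \<beta> i * ln c) \<le> (\<Sum>i\<in>I. 1 / c - \<beta> i)"
    using tm by (intro sum_mono) auto
  also have "\<dots> = 0" using assms cpos Ine by (simp add: sum_subtractf c_def)
  finally have "(\<Sum>i\<in>I. \<beta> i * (- ln (\<beta> i))) \<le> ln c"
    using assms by (simp add: sum_subtractf flip: sum_distrib_right)
  hence "(\<Sum>i\<in>I. \<beta> i * (- ln (\<beta> i))) / ln 2 \<le> ln c / ln 2" by (simp add: divide_right_mono)
  thus ?thesis by (simp add: log_def c_def sum_divide_distrib)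
qed

lemma mixture_bounds:
  fixes q :: "nat \<Rightarrow> real^'y::finite" and \<beta> :: "nat \<Rightarrow> real" and I :: "nat set"
  assumes fin: "finite I" and pv: "\<forall>i\<in>I. prob_vec (q i)" and b0: "\<forall>i\<in>I. \<beta> i \<ge> 0" and b1: "sum \<beta> I = 1"
  shows "(\<Sum>i\<in>I. \<beta> i * entropy (q i)) \<le> entropy (\<Sum>i\<in>I. \<beta> i *\<^sub>R q i)"
    and "entropy (\<Sum>i\<in>I. \<beta> i *\<^sub>R q i) \<le> (\<Sum>i\<in>I. \<beta> i * entropy (q i)) + log 2 (real (card I))"
proof -
  have comp: "(\<Sum>i\<in>I. \<beta> i *\<^sub>R q i) $ y = (\<Sum>i\<in>I. \<beta> i * q i $ y)" for y by simp
  have x0: "\<forall>i\<in>I. q i $ y \<ge> 0" for y using pv by (auto simp: prob_vec_def)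
  have qs: "(\<Sum>y\<in>UNIV. q i $ y) = 1" if "i \<in> I" for i using pv that by (auto simp: prob_vec_def)
  have eq1: "(\<Sum>i\<in>I. \<beta> i * entropy (q i)) = (\<Sum>y\<in>UNIV. \<Sum>i\<in>I. \<beta> i * (- (q i $ y * log 2 (q i $ y))))"
    by (simp add: entropy_def sum_distrib_left sum_negf sum.swap[of _ UNIV I])
  have "(\<Sum>y\<in>UNIV. \<Sum>i\<in>I. \<beta> i * (- (q i $ y * log 2 (q i $ y))))
      \<le> (\<Sum>y\<in>UNIV. - ((\<Sum>i\<in>I. \<beta> i * q i $ y) * log 2 (\<Sum>i\<in>I. \<beta> i * q i $ y)))"
    by (intro sum_mono mix_lower[OF fin b0 x0 b1])
  also have "\<dots> = entropy (\<Sum>i\<in>I. \<beta> i *\<^sub>R q i)"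
    by (simp add: entropy_def comp sum_negf)
  finally show "(\<Sum>i\<in>I. \<beta> i * entropy (q i)) \<le> entropy (\<Sum>i\<in>I. \<beta> i *\<^sub>R q i)" using eq1 by simp
  have "entropy (\<Sum>i\<in>I. \<beta> i *\<^sub>R q i) = (\<Sum>y\<in>UNIV. - ((\<Sum>i\<in>I. \<beta> i * q i $ y) * log 2 (\<Sum>i\<in>I. \<beta> i * q i $ y)))"
    by (simp add: entropy_def comp sum_negf)
  also have "\<dots> \<le> (\<Sum>y\<in>UNIV. \<Sum>i\<in>I. \<beta> i * (- (q i $ y * log 2 (q i $ y))) + \<beta> i * q i $ y * (- log 2 (\<beta> i)))"
    by (intro sum_mono mix_upper[OF fin b0 x0])
  also have "\<dots> = (\<Sum>i\<in>I. \<beta> i * entropy (q i)) + (\<Sum>i\<in>I. (\<Sum>y\<in>UNIV. q i $ y) * (\<beta> i * (- log 2 (\<beta> i))))"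
  proof -
    have "(\<Sum>y\<in>UNIV. \<Sum>i\<in>I. \<beta> i * q i $ y * (- log 2 (\<beta> i))) = (\<Sum>i\<in>I. \<Sum>y\<in>UNIV. \<beta> i * q i $ y * (- log 2 (\<beta> i)))"
      by (rule sum.swap)
    also have "\<dots> = (\<Sum>i\<in>I. (\<Sum>y\<in>UNIV. q i $ y) * (\<beta> i * (- log 2 (\<beta> i))))"
      by (intro sum.cong refl) (simp add: sum_distrib_right sum_distrib_left sum_negf mult_ac)
    finally show ?thesis unfolding eq1 sum.distrib by simp
  qed
  also have "(\<Sum>i\<in>I. (\<Sum>y\<in>UNIV. q i $ y) * (\<beta> i * (- log 2 (\<beta> i)))) = (\<Sum>i\<in>I. \<beta> i * (- log 2 (\<beta> i)))"
    using qs by (intro sum.cong) auto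
  also have "\<dots> \<le> log 2 (real (card I))" by (rule weight_entropy[OF fin b0 b1])
  finally show "entropy (\<Sum>i\<in>I. \<beta> i *\<^sub>R q i) \<le> (\<Sum>i\<in>I. \<beta> i * entropy (q i)) + log 2 (real (card I))"
    by simp
qed

theorem theorem3:
  fixes P :: "(real^'y::finite) set" and Pex :: "nat \<Rightarrow> real^'y" and S :: nat
  assumes "credal_set P" and "finitely_generated P"
    and "bij_betw Pex {1..S} {x. x extreme_point_of P}"
  defines "B \<equiv> Sup ((\<lambda>\<beta>. \<Sum>s=1..S. \<beta> s * entropy (Pex s)) ` prob_simplex S)"
    and "Hlow \<equiv> Min ((\<lambda>s. entropy (Pex s)) ` {1..S})"
    and "Hup \<equiv> Max ((\<lambda>s. entropy (Pex s)) ` {1..S})"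
    and "TU \<equiv> Sup (entropy ` P)"
    and "AU \<equiv> Inf (entropy ` P)"
  shows "max B Hup \<le> TU \<and> TU \<le> B + log 2 (real S)
       \<and> AU = Hlow
       \<and> max 0 (max B Hup - Hlow) \<le> TU - AU
       \<and> TU - AU \<le> B + log 2 (real S) - Hlow"
proof -
  define E where "E = {x. x extreme_point_of P}"
  have finE: "finite E" using assms(2) by (simp add: E_def finitely_generated_def)
  have Pne: "P \<noteq> {}" and clP: "closed P" and cvP: "convex P" and pvP: "\<forall>p\<in>P. prob_vec p"
    using assms(1) by (auto simp: credal_set_def)
  have "P \<subseteq> cbox 0 1"
  proof
    fix p assume "p \<in> P"
    hence pv: "prob_vec p" using pvP by auto
    have "p $ i \<le> 1" for i
    proof -
      have "p $ i \<le> (\<Sum>y\<in>UNIV. p $ y)" using pv by (intro member_le_sum) (auto simp: prob_vec_def)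
      thus ?thesis using pv by (simp add: prob_vec_def)
    qed
    thus "p \<in> cbox 0 1" using pv by (auto simp: mem_box_cart prob_vec_def)
  qed
  hence "bounded P" using bounded_cbox bounded_subset by blast
  hence cpP: "compact P" using clP by (simp add: compact_eq_bounded_closed)
  have KM: "P = convex hull E" unfolding E_def by (rule Krein_Milman_Minkowski[OF cpP cvP])
  have bij: "bij_betw Pex {1..S} E" using assms(3) by (simp add: E_def)
  have imgE: "Pex ` {1..S} = E" using bij by (simp add: bij_betw_def)
  have Ene: "E \<noteq> {}" using KM Pne by auto
  hence Sne: "{1..S} \<noteq> {}" using imgE by auto
  have EP: "E \<subseteq> P" by (auto simp: E_def extreme_point_of_def)
  have PexP: "Pex s \<in> P" if "s \<in> {1..S}" for s using imgE EP that by auto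
  have pvPex: "\<forall>s\<in>{1..S}. prob_vec (Pex s)" using PexP pvP by auto
  have rep: "\<exists>\<beta>. (\<forall>s\<in>{1..S}. \<beta> s \<ge> 0) \<and> sum \<beta> {1..S} = 1 \<and> p = (\<Sum>s\<in>{1..S}. \<beta> s *\<^sub>R Pex s)"
    if "p \<in> P" for p
  proof -
    from that KM finE obtain u where u: "\<forall>x\<in>E. 0 \<le> u x" "sum u E = 1" "(\<Sum>x\<in>E. u x *\<^sub>R x) = p"
      by (auto simp: convex_hull_finite)
    have "sum (\<lambda>s. u (Pex s)) {1..S} = sum u E" by (rule sum.reindex_bij_betw[OF bij])
    moreover have "(\<Sum>s\<in>{1..S}. u (Pex s) *\<^sub>R Pex s) = (\<Sum>x\<in>E. u x *\<^sub>R x)"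
      by (rule sum.reindex_bij_betw[OF bij, where g = "\<lambda>x. u x *\<^sub>R x"])
    moreover have "\<forall>s\<in>{1..S}. u (Pex s) \<ge> 0" using u(1) imgE by auto
    ultimately show ?thesis using u by (intro exI[of _ "\<lambda>s. u (Pex s)"]) auto
  qed
  have finI: "finite ((\<lambda>s. entropy (Pex s)) ` {1..S})" by simp
  have Hlow_le: "Hlow \<le> entropy (Pex s)" if "s \<in> {1..S}" for s
    unfolding Hlow_def using that by (intro Min_le) auto
  have Hup_ge: "entropy (Pex s) \<le> Hup" if "s \<in> {1..S}" for s
    unfolding Hup_def using that by (intro Max_ge) auto
  obtain s0 where s0: "s0 \<in> {1..S}" "entropy (Pex s0) = Hup"
  proof -
    have "Hup \<in> (\<lambda>s. entropy (Pex s)) ` {1..S}" unfolding Hup_def using Max_in[OF finI] Sne by blast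
    thus ?thesis using that by blast
  qed
  obtain s1 where s1: "s1 \<in> {1..S}" "entropy (Pex s1) = Hlow"
  proof -
    have "Hlow \<in> (\<lambda>s. entropy (Pex s)) ` {1..S}" unfolding Hlow_def using Min_in[OF finI] Sne by blast
    thus ?thesis using that by blast
  qed
  have wsum_up: "(\<Sum>s=1..S. \<beta> s * entropy (Pex s)) \<le> Hup"
    if "\<forall>s\<in>{1..S}. \<beta> s \<ge> 0" "sum \<beta> {1..S} = 1" for \<beta>
  proof -
    have "(\<Sum>s=1..S. \<beta> s * entropy (Pex s)) \<le> (\<Sum>s=1..S. \<beta> s * Hup)"
      using that Hup_ge by (intro sum_mono mult_left_mono) auto
    also have "\<dots> = Hup" using that by (simp flip: sum_distrib_right)
    finally show ?thesis .
  qed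
  have wsum_low: "Hlow \<le> (\<Sum>s=1..S. \<beta> s * entropy (Pex s))"
    if "\<forall>s\<in>{1..S}. \<beta> s \<ge> 0" "sum \<beta> {1..S} = 1" for \<beta>
  proof -
    have "(\<Sum>s=1..S. \<beta> s * Hlow) \<le> (\<Sum>s=1..S. \<beta> s * entropy (Pex s))"
      using that Hlow_le by (intro sum_mono mult_left_mono) auto
    moreover have "(\<Sum>s=1..S. \<beta> s * Hlow) = Hlow" using that by (simp flip: sum_distrib_right)
    ultimately show ?thesis by simp
  qed
  have cardI: "card {1..S} = S" by simp
  have entP: "Hlow \<le> entropy p \<and> entropy p \<le> Hup + log 2 (real S)" if pP: "p \<in> P" for p
  proof -
    obtain \<beta> where b: "\<forall>s\<in>{1..S}. \<beta> s \<ge> 0" "sum \<beta> {1..S} = 1" "p = (\<Sum>s\<in>{1..S}. \<beta> s *\<^sub>R Pex s)"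
      using rep[OF pP] by blast
    note mb = mixture_bounds[OF _ pvPex b(1) b(2)]
    show ?thesis using mb(1) mb(2) wsum_up[OF b(1,2)] wsum_low[OF b(1,2)] b(3) cardI by auto
  qed
  have BHup: "B = Hup" unfolding B_def
  proof (rule cSup_eq_maximum)
    define \<beta>0 where "\<beta>0 = (\<lambda>s. if s = s0 then 1 else (0::real))"
    have "(\<Sum>s=1..S. \<beta>0 s * entropy (Pex s)) = entropy (Pex s0)"
      using s0(1) by (simp add: \<beta>0_def if_distrib[of "\<lambda>c. c * _"] sum.delta cong: if_cong)
    moreover have "\<beta>0 \<in> prob_simplex S" using s0(1) by (simp add: prob_simplex_def \<beta>0_def sum.delta)
    ultimately show "Hup \<in> (\<lambda>\<beta>. \<Sum>s = 1..S. \<beta> s * entropy (Pex s)) ` prob_simplex S"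
      using s0(2) by force
  next
    fix x assume "x \<in> (\<lambda>\<beta>. \<Sum>s = 1..S. \<beta> s * entropy (Pex s)) ` prob_simplex S"
    then show "x \<le> Hup" using wsum_up by (auto simp: prob_simplex_def)
  qed
  have bdd: "bdd_above (entropy ` P)" by (rule bdd_aboveI2[where M="Hup + log 2 (real S)"]) (use entP in auto)
  have TU1: "Hup \<le> TU" unfolding TU_def using s0 PexP[OF s0(1)] bdd
    by (metis cSup_upper imageI)
  have TU2: "TU \<le> Hup + log 2 (real S)" unfolding TU_def using Pne entP
    by (intro cSup_least) auto
  have AU: "AU = Hlow" unfolding AU_def
    using s1 PexP[OF s1(1)] entP by (intro cInf_eq_minimum) auto
  have "Hlow \<le> Hup" using Hlow_le Hup_ge s0(1) by fastforce
  thus ?thesis using TU1 TU2 AU BHup by auto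
qed

end
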